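(* Let $q\in(0,1]$. Assume [A7$'$]: for some $R>0$, (i) for every $T\in\mathbb T$, $\mathbb H_T$ is almost surely thrice differentiable in $\theta$ on $B=\{\theta\in\Theta:|\theta-\theta^*|<R\}$; (ii) $\|a_T\|\partial_\theta\mathbb H_T(\theta^* )=O_p(1)$; (iii) $\|a_T\|^2\sup_{\theta\in B}|\partial_\theta^2\mathbb H_T(\theta)|=O_p(1)$; (iv) $\|a_T\|^2\sup_{\theta\in B}|\partial_\theta^3\mathbb H_T(\theta)|=O_p(1)$. Then the following hold: [A8] for all $M>0$, $\sup_{u\in\mathbb U_T,\ |u|<M}|\mathbb H_T(\theta^*+a_Tu)-\mathbb H_T(\theta^* )|=O_p(1)$ as $T\to\infty$; [A9] for all $M>0$, $\sup_{u,v\in\mathbb U_T,\ |u|,|v|<M,\ u\ne v}\frac{|\mathbb H_T(\theta^*+a_Tu)-\mathbb H_T(\theta^*+a_Tv)|}{|u-v|^q}=O_p(1)$ as $T\to\infty$.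
   Context: Let $\Theta\subset\mathbb R^{\mathsf p}$ be a bounded open set with closure $\overline\Theta$ and $\theta^*\in\Theta$. Let $(\Omega,\mathcal F,P)$ be a probability space, $\mathbb T\subset\mathbb R_{\ge0}$ with $\sup\mathbb T=\infty$; limits $T\to\infty$ are along $\mathbb T$. For each $T\in\mathbb T$, $\mathbb H_T:\Omega\times\overline\Theta\to\mathbb R$ is a random field continuous in $\theta$ for every $\omega$. $a_T$ is a deterministic invertible diagonal $\mathsf p\times\mathsf p$ matrix with $\|a_T\|\to0$ ($\|\cdot\|$ the spectral norm), and $\mathbb U_T=\{u\in\mathbb R^{\mathsf p}:\theta^*+a_Tu\in\overline\Theta\}$. $\partial_\theta^k\mathbb H_T$ is the $k$-th derivative tensor in $\theta$. $X_T=O_p(1)$ means tightness: for every $\epsilon>0$ there are $\mathcal T\in\mathbb T$, $M>0$ with $P(|X_T|>M)<\epsilon$ for $T\ge\mathcal T$. *)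

theory Defs
  imports "HOL-Probability.Probability"
begin

definition outer_prob :: "'w measure \<Rightarrow> 'w set \<Rightarrow> real" where
  "outer_prob P A = (INF B \<in> {B \<in> sets P. A \<inter> space P \<subseteq> B}. measure P B)"

text \<open>Tightness along the index set TT (limits T to infinity along TT):
  X_T = O_p(1). Values in ereal so that suprema (possibly infinite) can be used directly.\<close>
definition O_p1 :: "'w measure \<Rightarrow> real set \<Rightarrow> (real \<Rightarrow> 'w \<Rightarrow> ereal) \<Rightarrow> bool" where
  "O_p1 P TT X \<longleftrightarrow>
     (\<forall>\<epsilon>>0. \<exists>T0\<in>TT. \<exists>M>0. \<forall>T\<in>TT. T \<ge> T0 \<longrightarrow>
        outer_prob P {\<omega> \<in> space P. ereal M < \<bar>X T \<omega>\<bar>} < \<epsilon>)"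

definition thrice_diff_on ::
  "('a::real_normed_vector \<Rightarrow> real) \<Rightarrow> ('a \<Rightarrow> 'a \<Rightarrow>\<^sub>L real)
   \<Rightarrow> ('a \<Rightarrow> 'a \<Rightarrow>\<^sub>L ('a \<Rightarrow>\<^sub>L real))
   \<Rightarrow> ('a \<Rightarrow> 'a \<Rightarrow>\<^sub>L ('a \<Rightarrow>\<^sub>L ('a \<Rightarrow>\<^sub>L real))) \<Rightarrow> 'a set \<Rightarrow> bool" where
  "thrice_diff_on f D1 D2 D3 S \<longleftrightarrow>
     (\<forall>\<theta>\<in>S. (f has_derivative blinfun_apply (D1 \<theta>)) (at \<theta>)
           \<and> (D1 has_derivative blinfun_apply (D2 \<theta>)) (at \<theta>)
           \<and> (D2 has_derivative blinfun_apply (D3 \<theta>)) (at \<theta>))"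

end

theory Submission imports Defs begin
lemma core:
  fixes f :: "'a::real_normed_vector \<Rightarrow> real" and D1 :: "'a \<Rightarrow> 'a \<Rightarrow>\<^sub>L real"
    and D2 :: "'a \<Rightarrow> 'a \<Rightarrow>\<^sub>L ('a \<Rightarrow>\<^sub>L real)"
  assumes d: "\<forall>\<theta>\<in>cball c \<rho>. (f has_derivative blinfun_apply (D1 \<theta>)) (at \<theta>)
          \<and> (D1 has_derivative blinfun_apply (D2 \<theta>)) (at \<theta>)"
    and rho: "0 \<le> \<rho>" and al: "\<alpha> > 0" and m1: "\<alpha> * norm (D1 c) \<le> M1"
    and m2: "\<forall>\<theta>\<in>cball c \<rho>. \<alpha>\<^sup>2 * norm (D2 \<theta>) \<le> M2"
    and x: "x \<in> cball c \<rho>" and y: "y \<in> cball c \<rho>"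
  shows "\<alpha> * \<bar>f x - f y\<bar> \<le> (M1 + M2 * \<rho> / \<alpha>) * norm (x - y)"
proof -
  have c: "c \<in> cball c \<rho>" using rho by simp
  have b2: "norm (D2 \<theta>) \<le> M2 / \<alpha>\<^sup>2" if "\<theta> \<in> cball c \<rho>" for \<theta>
    using m2 that al by (simp add: field_simps mult.commute)
  have d1: "norm (D1 \<theta> - D1 c) \<le> M2 / \<alpha>\<^sup>2 * norm (\<theta> - c)" if t: "\<theta> \<in> cball c \<rho>" for \<theta>
  proof (rule differentiable_bound[OF convex_cball _ _ t c])
    fix z assume z: "z \<in> cball c \<rho>"
    show "(D1 has_derivative blinfun_apply (D2 z)) (at z within cball c \<rho>)"
      using d z has_derivative_at_withinI by blast
    show "onorm (blinfun_apply (D2 z)) \<le> M2 / \<alpha>\<^sup>2" using b2[OF z] by (simp add: norm_blinfun.rep_eq)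
  qed
  have n1: "norm (D1 \<theta>) \<le> M1 / \<alpha> + M2 * \<rho> / \<alpha>\<^sup>2" if t: "\<theta> \<in> cball c \<rho>" for \<theta>
  proof -
    have "norm (D1 \<theta>) \<le> norm (D1 c) + norm (D1 \<theta> - D1 c)" by (metis norm_triangle_sub add.commute)
    also have "norm (D1 c) \<le> M1 / \<alpha>" using m1 al by (simp add: field_simps mult.commute)
    also have "norm (D1 \<theta> - D1 c) \<le> M2 / \<alpha>\<^sup>2 * \<rho>"
    proof -
      have "M2 \<ge> 0" using m2 c al by (metis norm_ge_zero zero_le_mult_iff zero_less_power order_trans order_less_le)
      hence "M2 / \<alpha>\<^sup>2 * norm (\<theta> - c) \<le> M2 / \<alpha>\<^sup>2 * \<rho>" using t
        by (intro mult_left_mono) (auto simp: dist_norm norm_minus_commute)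
      thus ?thesis using d1[OF t] by linarith
    qed
    finally show ?thesis by simp
  qed
  have "\<bar>f x - f y\<bar> \<le> (M1 / \<alpha> + M2 * \<rho> / \<alpha>\<^sup>2) * norm (x - y)"
  proof -
    have "norm (f x - f y) \<le> (M1 / \<alpha> + M2 * \<rho> / \<alpha>\<^sup>2) * norm (x - y)"
    proof (rule differentiable_bound[OF convex_cball _ _ x y])
      fix z assume z: "z \<in> cball c \<rho>"
      show "(f has_derivative blinfun_apply (D1 z)) (at z within cball c \<rho>)"
        using d z has_derivative_at_withinI by blast
      show "onorm (blinfun_apply (D1 z)) \<le> M1 / \<alpha> + M2 * \<rho> / \<alpha>\<^sup>2" using n1[OF z] by (simp add: norm_blinfun.rep_eq)
    qed
    thus ?thesis by simp
  qed
  hence "\<alpha> * \<bar>f x - f y\<bar> \<le> \<alpha> * ((M1 / \<alpha> + M2 * \<rho> / \<alpha>\<^sup>2) * norm (x - y))"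
    using al by (intro mult_left_mono) auto
  also have "\<dots> = (M1 + M2 * \<rho> / \<alpha>) * norm (x - y)" using al by (simp add: field_simps power2_eq_square)
  finally show ?thesis .
qed

lemma op_le: "B \<in> sets P \<Longrightarrow> A \<inter> space P \<subseteq> B \<Longrightarrow> outer_prob P A \<le> measure P B"
  unfolding outer_prob_def by (rule cINF_lower) (auto intro: bdd_belowI[of _ 0])

lemma op_lt: "outer_prob P A < e \<Longrightarrow> \<exists>B\<in>sets P. A \<inter> space P \<subseteq> B \<and> measure P B < e"
  unfolding outer_prob_def
proof -
  assume "(INF B \<in> {B \<in> sets P. A \<inter> space P \<subseteq> B}. measure P B) < e"
  moreover have "{B \<in> sets P. A \<inter> space P \<subseteq> B} \<noteq> {}" by auto
  ultimately show ?thesis by (subst (asm) cINF_less_iff) (auto intro: bdd_belowI[of _ 0])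
qed

lemma sup_bound:
  fixes g :: "'a \<Rightarrow> ereal"
  assumes "S \<noteq> {}" "\<And>x. x \<in> S \<Longrightarrow> 0 \<le> g x \<and> g x \<le> ereal C"
  shows "\<bar>SUP x\<in>S. g x\<bar> \<le> ereal C"
proof -
  obtain x0 where x0: "x0 \<in> S" using assms(1) by auto
  have "0 \<le> g x0" using assms(2)[OF x0] by simp
  also have "\<dots> \<le> (SUP x\<in>S. g x)" using x0 by (rule SUP_upper)
  finally have ge: "0 \<le> (SUP x\<in>S. g x)" .
  have le: "(SUP x\<in>S. g x) \<le> ereal C" using assms(2) by (intro SUP_least) auto
  show ?thesis using ge le by (simp add: abs_ereal_pos)
qed

lemma main_bound:
  fixes f :: "real^'p::finite \<Rightarrow> real" and a :: "real^'p^'p"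
  assumes d: "thrice_diff_on f D1 D2 D3 Bs"
    and rB: "ball c r \<subseteq> Bs" and c: "c \<in> Bs"
    and ar: "onorm (\<lambda>x. a *v x) * K < r" and K: "K > 0"
    and m1: "onorm (\<lambda>x. a *v x) * norm (D1 c) \<le> M1"
    and m2: "\<forall>\<theta>\<in>Bs. (onorm (\<lambda>x. a *v x))\<^sup>2 * norm (D2 \<theta>) \<le> M2"
    and u: "norm u < K" and v: "norm v < K"
  shows "\<bar>f (c + a *v u) - f (c + a *v v)\<bar> \<le> (M1 + M2 * K) * norm (u - v)"
proof -
  define \<alpha> where "\<alpha> = onorm (\<lambda>x. a *v x)"
  have al0: "\<alpha> \<ge> 0" unfolding \<alpha>_def by (rule onorm_pos_le) simp
  have nb: "norm (a *v x) \<le> \<alpha> * norm x" for x unfolding \<alpha>_def by (rule onorm) simp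
  have M1: "M1 \<ge> 0" using m1 al0 unfolding \<alpha>_def[symmetric] by (metis norm_ge_zero zero_le_mult_iff order_trans)
  have M2: "M2 \<ge> 0" using m2 c al0 unfolding \<alpha>_def[symmetric]
    by (metis norm_ge_zero zero_le_mult_iff zero_le_power order_trans)
  have R0: "0 \<le> (M1 + M2 * K) * norm (u - v)" using M1 M2 K by simp
  show ?thesis
  proof (cases "\<alpha> = 0")
    case True
    hence "a *v x = 0" for x using nb[of x] by simp
    thus ?thesis using R0 by simp
  next
    case False
    hence al: "\<alpha> > 0" using al0 by simp
    define \<rho> where "\<rho> = \<alpha> * K"
    have sub: "cball c \<rho> \<subseteq> Bs" using rB ar unfolding \<rho>_def \<alpha>_def by (auto simp: subset_eq)
    have dd: "\<forall>\<theta>\<in>cball c \<rho>. (f has_derivative blinfun_apply (D1 \<theta>)) (at \<theta>)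
          \<and> (D1 has_derivative blinfun_apply (D2 \<theta>)) (at \<theta>)"
      using d sub unfolding thrice_diff_on_def by blast
    have xin: "c + a *v w \<in> cball c \<rho>" if "norm w < K" for w
    proof -
      have "norm (a *v w) \<le> \<alpha> * norm w" by (rule nb)
      also have "\<dots> \<le> \<rho>" unfolding \<rho>_def using al that by simp
      finally show ?thesis by (simp add: dist_norm)
    qed
    have "\<alpha> * \<bar>f (c + a *v u) - f (c + a *v v)\<bar> \<le> (M1 + M2 * \<rho> / \<alpha>) * norm ((c + a *v u) - (c + a *v v))"
      by (rule core[OF dd _ al _ _ xin[OF u] xin[OF v]])
         (use al K m1 m2 sub in \<open>auto simp: \<rho>_def \<alpha>_def\<close>)
    also have "(c + a *v u) - (c + a *v v) = a *v (u - v)" by (simp add: matrix_vector_mult_diff_distrib)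
    also have "M1 + M2 * \<rho> / \<alpha> = M1 + M2 * K" using al by (simp add: \<rho>_def)
    also have "(M1 + M2 * K) * norm (a *v (u - v)) \<le> (M1 + M2 * K) * (\<alpha> * norm (u - v))"
      using M1 M2 K nb by (intro mult_left_mono) auto
    finally have "\<alpha> * \<bar>f (c + a *v u) - f (c + a *v v)\<bar> \<le> \<alpha> * ((M1 + M2 * K) * norm (u - v))" by (metis mult.left_commute)
    thus ?thesis using al by simp
  qed
qed


lemma ereal_le_abs: "(x::ereal) \<le> \<bar>x\<bar>" by (cases x) auto

lemma pow_bound:
  fixes n K q L d :: real
  assumes "n > 0" "n \<le> 2 * K" "0 < q" "q \<le> 1" "0 \<le> L" "d \<le> L * n"
  shows "d / n powr q \<le> L * (2 * K) powr (1 - q)"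
proof -
  have "d / n powr q \<le> L * n / n powr q" using assms by (simp add: divide_right_mono)
  also have "\<dots> = L * n powr (1 - q)" using assms(1) by (simp add: powr_diff)
  also have "\<dots> \<le> L * (2 * K) powr (1 - q)" using assms by (intro mult_left_mono powr_mono2) auto
  finally show ?thesis .
qed

theorem proposition3:
  fixes P :: "'w measure"
    and \<Theta> :: "(real^'p::finite) set"
    and \<theta>s :: "real^'p"
    and TT :: "real set"
    and H :: "real \<Rightarrow> 'w \<Rightarrow> real^'p \<Rightarrow> real"
    and a :: "real \<Rightarrow> real^'p^'p"
    and q R :: real
    and D1 :: "real \<Rightarrow> 'w \<Rightarrow> real^'p \<Rightarrow> (real^'p) \<Rightarrow>\<^sub>L real"
    and D2 :: "real \<Rightarrow> 'w \<Rightarrow> real^'p \<Rightarrow> (real^'p) \<Rightarrow>\<^sub>L ((real^'p) \<Rightarrow>\<^sub>L real)"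
    and D3 :: "real \<Rightarrow> 'w \<Rightarrow> real^'p \<Rightarrow> (real^'p) \<Rightarrow>\<^sub>L ((real^'p) \<Rightarrow>\<^sub>L ((real^'p) \<Rightarrow>\<^sub>L real))"
  assumes P: "prob_space P"
    and \<Theta>_open: "open \<Theta>" and \<Theta>_bdd: "bounded \<Theta>" and \<theta>s: "\<theta>s \<in> \<Theta>"
    and TT_nonneg: "TT \<subseteq> {0..}" and TT_unbdd: "\<not> bdd_above TT"
    and H_cont: "\<forall>T\<in>TT. \<forall>\<omega>\<in>space P. continuous_on (closure \<Theta>) (H T \<omega>)"
    and H_meas: "\<forall>T\<in>TT. \<forall>\<theta>\<in>closure \<Theta>. (\<lambda>\<omega>. H T \<omega> \<theta>) \<in> borel_measurable P"
    and a_diag: "\<forall>T\<in>TT. \<forall>i j. i \<noteq> j \<longrightarrow> a T $ i $ j = 0"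
    and a_inv: "\<forall>T\<in>TT. invertible (a T)"
    and a_lim: "\<forall>\<epsilon>>0. \<exists>T0\<in>TT. \<forall>T\<in>TT. T \<ge> T0 \<longrightarrow> onorm (\<lambda>x. a T *v x) < \<epsilon>"
    and q: "0 < q" "q \<le> 1"
    and R: "R > 0"
    and A7_i: "\<forall>T\<in>TT. AE \<omega> in P.
        thrice_diff_on (H T \<omega>) (D1 T \<omega>) (D2 T \<omega>) (D3 T \<omega>) {\<theta> \<in> \<Theta>. norm (\<theta> - \<theta>s) < R}"
    and A7_ii: "O_p1 P TT (\<lambda>T \<omega>. ereal (onorm (\<lambda>x. a T *v x) * norm (D1 T \<omega> \<theta>s)))"
    and A7_iii: "O_p1 P TT (\<lambda>T \<omega>. SUP \<theta>\<in>{\<theta> \<in> \<Theta>. norm (\<theta> - \<theta>s) < R}.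
        ereal ((onorm (\<lambda>x. a T *v x))\<^sup>2 * norm (D2 T \<omega> \<theta>)))"
    and A7_iv: "O_p1 P TT (\<lambda>T \<omega>. SUP \<theta>\<in>{\<theta> \<in> \<Theta>. norm (\<theta> - \<theta>s) < R}.
        ereal ((onorm (\<lambda>x. a T *v x))\<^sup>2 * norm (D3 T \<omega> \<theta>)))"
  shows "(\<forall>K>0. O_p1 P TT (\<lambda>T \<omega>.
            SUP u\<in>{u. \<theta>s + a T *v u \<in> closure \<Theta> \<and> norm u < K}.
              ereal \<bar>H T \<omega> (\<theta>s + a T *v u) - H T \<omega> \<theta>s\<bar>))
       \<and> (\<forall>K>0. O_p1 P TT (\<lambda>T \<omega>.
            SUP (u, v)\<in>{(u, v). \<theta>s + a T *v u \<in> closure \<Theta> \<and> \<theta>s + a T *v v \<in> closure \<Theta>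
                              \<and> norm u < K \<and> norm v < K \<and> u \<noteq> v}.
              ereal (\<bar>H T \<omega> (\<theta>s + a T *v u) - H T \<omega> (\<theta>s + a T *v v)\<bar> / norm (u - v) powr q)))"
  proof -
  interpret prob_space P by (rule P)
  define Bs where "Bs = {\<theta> \<in> \<Theta>. norm (\<theta> - \<theta>s) < R}"
  obtain r0 where r0: "r0 > 0" "ball \<theta>s r0 \<subseteq> \<Theta>" using \<Theta>_open \<theta>s open_contains_ball by blast
  define r where "r = min r0 R"
  have r: "r > 0" using r0 R by (simp add: r_def)
  have rB: "ball \<theta>s r \<subseteq> Bs" using r0 unfolding r_def Bs_def
    by (auto simp: dist_norm norm_minus_commute)
  have cB: "\<theta>s \<in> Bs" using \<theta>s R by (simp add: Bs_def)
  have BsT: "Bs \<subseteq> \<Theta>" by (auto simp: Bs_def)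
  have key: "\<exists>T0\<in>TT. \<exists>M1>0. \<exists>M2>0. \<forall>T\<in>TT. T \<ge> T0 \<longrightarrow> onorm (\<lambda>x. a T *v x) * K < r \<and>
      (\<exists>E\<in>sets P. measure P E < \<epsilon> \<and> (\<forall>\<omega>\<in>space P - E.
         thrice_diff_on (H T \<omega>) (D1 T \<omega>) (D2 T \<omega>) (D3 T \<omega>) Bs
         \<and> onorm (\<lambda>x. a T *v x) * norm (D1 T \<omega> \<theta>s) \<le> M1
         \<and> (\<forall>\<theta>\<in>Bs. (onorm (\<lambda>x. a T *v x))\<^sup>2 * norm (D2 T \<omega> \<theta>) \<le> M2)))"
    if K: "K > 0" and e: "\<epsilon> > 0" for K \<epsilon> :: real
  proof -
    have e3: "\<epsilon> / 3 > 0" using e by simp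
    obtain T1 M1 where T1: "T1 \<in> TT" "M1 > 0" and h1: "\<forall>T\<in>TT. T \<ge> T1 \<longrightarrow>
        outer_prob P {\<omega> \<in> space P. ereal M1 < \<bar>ereal (onorm (\<lambda>x. a T *v x) * norm (D1 T \<omega> \<theta>s))\<bar>} < \<epsilon> / 3"
      using A7_ii e3 unfolding O_p1_def by blast
    obtain T2 M2 where T2: "T2 \<in> TT" "M2 > 0" and h2: "\<forall>T\<in>TT. T \<ge> T2 \<longrightarrow>
        outer_prob P {\<omega> \<in> space P. ereal M2 < \<bar>SUP \<theta>\<in>Bs. ereal ((onorm (\<lambda>x. a T *v x))\<^sup>2 * norm (D2 T \<omega> \<theta>))\<bar>} < \<epsilon> / 3"
      using A7_iii e3 unfolding O_p1_def Bs_def by blast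
    have rK: "r / K > 0" using r K by simp
    obtain T3 where T3: "T3 \<in> TT" "\<forall>T\<in>TT. T \<ge> T3 \<longrightarrow> onorm (\<lambda>x. a T *v x) < r / K"
      using a_lim rK by blast
    define T0 where "T0 = max (max T1 T2) T3"
    have T0: "T0 \<in> TT" using T1 T2 T3 by (simp add: T0_def max_def)
    have "\<forall>T\<in>TT. T \<ge> T0 \<longrightarrow> onorm (\<lambda>x. a T *v x) * K < r \<and>
      (\<exists>E\<in>sets P. measure P E < \<epsilon> \<and> (\<forall>\<omega>\<in>space P - E.
         thrice_diff_on (H T \<omega>) (D1 T \<omega>) (D2 T \<omega>) (D3 T \<omega>) Bs
         \<and> onorm (\<lambda>x. a T *v x) * norm (D1 T \<omega> \<theta>s) \<le> M1
         \<and> (\<forall>\<theta>\<in>Bs. (onorm (\<lambda>x. a T *v x))\<^sup>2 * norm (D2 T \<omega> \<theta>) \<le> M2)))"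
    proof (intro ballI impI conjI)
      fix T assume T: "T \<in> TT" "T0 \<le> T"
      have TT1: "T \<ge> T1" and TT2: "T \<ge> T2" and TT3: "T \<ge> T3" using T by (auto simp: T0_def)
      show "onorm (\<lambda>x. a T *v x) * K < r"
        using T3(2) T(1) TT3 K by (simp add: pos_less_divide_eq)
      obtain E1 where E1: "E1 \<in> sets P" "{\<omega> \<in> space P. ereal M1 < \<bar>ereal (onorm (\<lambda>x. a T *v x) * norm (D1 T \<omega> \<theta>s))\<bar>} \<inter> space P \<subseteq> E1" "measure P E1 < \<epsilon> / 3"
        using op_lt[OF h1[rule_format, OF T(1) TT1]] by blast
      obtain E2 where E2: "E2 \<in> sets P" "{\<omega> \<in> space P. ereal M2 < \<bar>SUP \<theta>\<in>Bs. ereal ((onorm (\<lambda>x. a T *v x))\<^sup>2 * norm (D2 T \<omega> \<theta>))\<bar>} \<inter> space P \<subseteq> E2" "measure P E2 < \<epsilon> / 3"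
        using op_lt[OF h2[rule_format, OF T(1) TT2]] by blast
      have "AE \<omega> in P. thrice_diff_on (H T \<omega>) (D1 T \<omega>) (D2 T \<omega>) (D3 T \<omega>) Bs"
        using A7_i T(1) unfolding Bs_def by blast
      then obtain N where N: "{\<omega> \<in> space P. \<not> thrice_diff_on (H T \<omega>) (D1 T \<omega>) (D2 T \<omega>) (D3 T \<omega>) Bs} \<subseteq> N" "N \<in> null_sets P"
        by (rule AE_E) (auto intro: null_setsI)
      define E where "E = E1 \<union> E2 \<union> N"
      have NS: "N \<in> sets P" using N(2) by auto
      have N0: "measure P N = 0" using N(2) by (simp add: measure_def null_setsD1)
      have Es: "E \<in> sets P" using E1 E2 NS by (auto simp: E_def)
      have mm1: "measure P E \<le> measure P (E1 \<union> E2) + measure P N"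
        unfolding E_def using E1 E2 NS by (intro measure_Un_le) auto
      have mm2: "measure P (E1 \<union> E2) \<le> measure P E1 + measure P E2"
        using E1 E2 by (intro measure_Un_le) auto
      have mE: "measure P E < \<epsilon>" using mm1 mm2 E1(3) E2(3) N0 using e by linarith
      show "\<exists>E\<in>sets P. measure P E < \<epsilon> \<and> (\<forall>\<omega>\<in>space P - E.
         thrice_diff_on (H T \<omega>) (D1 T \<omega>) (D2 T \<omega>) (D3 T \<omega>) Bs
         \<and> onorm (\<lambda>x. a T *v x) * norm (D1 T \<omega> \<theta>s) \<le> M1
         \<and> (\<forall>\<theta>\<in>Bs. (onorm (\<lambda>x. a T *v x))\<^sup>2 * norm (D2 T \<omega> \<theta>) \<le> M2))"
      proof (intro bexI[OF _ Es] conjI mE ballI)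
        fix \<omega> assume w: "\<omega> \<in> space P - E"
        show "thrice_diff_on (H T \<omega>) (D1 T \<omega>) (D2 T \<omega>) (D3 T \<omega>) Bs"
          using w N(1) by (auto simp: E_def)
        have "\<not> ereal M1 < \<bar>ereal (onorm (\<lambda>x. a T *v x) * norm (D1 T \<omega> \<theta>s))\<bar>"
          using w E1(2) by (auto simp: E_def)
        thus "onorm (\<lambda>x. a T *v x) * norm (D1 T \<omega> \<theta>s) \<le> M1" by simp
        have nl: "\<not> ereal M2 < \<bar>SUP \<theta>\<in>Bs. ereal ((onorm (\<lambda>x. a T *v x))\<^sup>2 * norm (D2 T \<omega> \<theta>))\<bar>"
          using w E2(2) by (auto simp: E_def)
        fix \<theta> assume th: "\<theta> \<in> Bs"
        have "ereal ((onorm (\<lambda>x. a T *v x))\<^sup>2 * norm (D2 T \<omega> \<theta>)) \<le> (SUP \<theta>\<in>Bs. ereal ((onorm (\<lambda>x. a T *v x))\<^sup>2 * norm (D2 T \<omega> \<theta>)))"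
          using th by (rule SUP_upper)
        also have "\<dots> \<le> \<bar>SUP \<theta>\<in>Bs. ereal ((onorm (\<lambda>x. a T *v x))\<^sup>2 * norm (D2 T \<omega> \<theta>))\<bar>" by (rule ereal_le_abs)
        also have "\<dots> \<le> ereal M2" using nl by simp
        finally show "(onorm (\<lambda>x. a T *v x))\<^sup>2 * norm (D2 T \<omega> \<theta>) \<le> M2" by simp
      qed
    qed
    thus ?thesis using T0 T1(2) T2(2) by blast
  qed
  have inball: "\<theta>s + a T *v w \<in> Bs" if "onorm (\<lambda>x. a T *v x) * K < r" "norm w < K" for T w and K :: real
  proof -
    have "norm (a T *v w) \<le> onorm (\<lambda>x. a T *v x) * norm w" by (rule onorm) simp
    also have "\<dots> \<le> onorm (\<lambda>x. a T *v x) * K"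
      using that(2) by (intro mult_left_mono onorm_pos_le) auto
    finally have "norm (a T *v w) < r" using that(1) by simp
    thus ?thesis using rB by (auto simp: dist_norm subset_eq)
  qed
  show ?thesis
  proof (intro conjI allI impI)
    fix K :: real assume K: "K > 0"
    show "O_p1 P TT (\<lambda>T \<omega>. SUP u\<in>{u. \<theta>s + a T *v u \<in> closure \<Theta> \<and> norm u < K}.
              ereal \<bar>H T \<omega> (\<theta>s + a T *v u) - H T \<omega> \<theta>s\<bar>)"
      unfolding O_p1_def
    proof (intro allI impI)
      fix \<epsilon> :: real assume e: "\<epsilon> > 0"
      obtain T0 M1 M2 where T0: "T0 \<in> TT" "M1 > 0" "M2 > 0" and kk: "\<forall>T\<in>TT. T \<ge> T0 \<longrightarrow> onorm (\<lambda>x. a T *v x) * K < r \<and>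
      (\<exists>E\<in>sets P. measure P E < \<epsilon> \<and> (\<forall>\<omega>\<in>space P - E.
         thrice_diff_on (H T \<omega>) (D1 T \<omega>) (D2 T \<omega>) (D3 T \<omega>) Bs
         \<and> onorm (\<lambda>x. a T *v x) * norm (D1 T \<omega> \<theta>s) \<le> M1
         \<and> (\<forall>\<theta>\<in>Bs. (onorm (\<lambda>x. a T *v x))\<^sup>2 * norm (D2 T \<omega> \<theta>) \<le> M2)))"
        using key[OF K e] by blast
      define C where "C = (M1 + M2 * K) * K"
      have C: "C \<ge> 0" using T0 K by (simp add: C_def)
      show "\<exists>T0\<in>TT. \<exists>M>0. \<forall>T\<in>TT. T0 \<le> T \<longrightarrow> outer_prob P {\<omega> \<in> space P. ereal M < \<bar>SUP u\<in>{u. \<theta>s + a T *v u \<in> closure \<Theta> \<and> norm u < K}.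
              ereal \<bar>H T \<omega> (\<theta>s + a T *v u) - H T \<omega> \<theta>s\<bar>\<bar>} < \<epsilon>"
      proof (intro bexI[OF _ T0(1)] exI[of _ "C + 1"] conjI ballI impI)
        show "C + 1 > 0" using C by simp
        fix T assume T: "T \<in> TT" "T0 \<le> T"
        have ar: "onorm (\<lambda>x. a T *v x) * K < r" using kk T by blast
        obtain E where E: "E \<in> sets P" "measure P E < \<epsilon>" and good: "\<forall>\<omega>\<in>space P - E.
         thrice_diff_on (H T \<omega>) (D1 T \<omega>) (D2 T \<omega>) (D3 T \<omega>) Bs
         \<and> onorm (\<lambda>x. a T *v x) * norm (D1 T \<omega> \<theta>s) \<le> M1
         \<and> (\<forall>\<theta>\<in>Bs. (onorm (\<lambda>x. a T *v x))\<^sup>2 * norm (D2 T \<omega> \<theta>) \<le> M2)"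
          using kk T by blast
        have "{\<omega> \<in> space P. ereal (C + 1) < \<bar>SUP u\<in>{u. \<theta>s + a T *v u \<in> closure \<Theta> \<and> norm u < K}.
              ereal \<bar>H T \<omega> (\<theta>s + a T *v u) - H T \<omega> \<theta>s\<bar>\<bar>} \<inter> space P \<subseteq> E"
        proof (rule subsetI, rule ccontr)
          fix \<omega> assume w: "\<omega> \<in> {\<omega> \<in> space P. ereal (C + 1) < \<bar>SUP u\<in>{u. \<theta>s + a T *v u \<in> closure \<Theta> \<and> norm u < K}.
              ereal \<bar>H T \<omega> (\<theta>s + a T *v u) - H T \<omega> \<theta>s\<bar>\<bar>} \<inter> space P" and nE: "\<omega> \<notin> E"
          have g: "thrice_diff_on (H T \<omega>) (D1 T \<omega>) (D2 T \<omega>) (D3 T \<omega>) Bs"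
            "onorm (\<lambda>x. a T *v x) * norm (D1 T \<omega> \<theta>s) \<le> M1"
            "\<forall>\<theta>\<in>Bs. (onorm (\<lambda>x. a T *v x))\<^sup>2 * norm (D2 T \<omega> \<theta>) \<le> M2"
            using good w nE by auto
          have "\<bar>SUP u\<in>{u. \<theta>s + a T *v u \<in> closure \<Theta> \<and> norm u < K}.
              ereal \<bar>H T \<omega> (\<theta>s + a T *v u) - H T \<omega> \<theta>s\<bar>\<bar> \<le> ereal C"
          proof (rule sup_bound)
            show "{u. \<theta>s + a T *v u \<in> closure \<Theta> \<and> norm u < K} \<noteq> {}"
              using K \<theta>s closure_subset by (intro ex_in_conv[THEN iffD1] exI[of _ 0]) auto
            fix u assume u: "u \<in> {u. \<theta>s + a T *v u \<in> closure \<Theta> \<and> norm u < K}"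
            have "\<bar>H T \<omega> (\<theta>s + a T *v u) - H T \<omega> (\<theta>s + a T *v 0)\<bar> \<le> (M1 + M2 * K) * norm (u - 0)"
              using u K by (intro main_bound[OF g(1) rB cB ar K g(2) g(3)]) auto
            also have "\<dots> \<le> C" unfolding C_def using u T0 K by (intro mult_left_mono) auto
            finally show "0 \<le> ereal \<bar>H T \<omega> (\<theta>s + a T *v u) - H T \<omega> \<theta>s\<bar> \<and>
                ereal \<bar>H T \<omega> (\<theta>s + a T *v u) - H T \<omega> \<theta>s\<bar> \<le> ereal C" by simp
          qed
          hence "\<bar>SUP u\<in>{u. \<theta>s + a T *v u \<in> closure \<Theta> \<and> norm u < K}.
              ereal \<bar>H T \<omega> (\<theta>s + a T *v u) - H T \<omega> \<theta>s\<bar>\<bar> < ereal (C + 1)" by (rule le_less_trans) simp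
          thus False using w by auto
        qed
        hence "outer_prob P {\<omega> \<in> space P. ereal (C + 1) < \<bar>SUP u\<in>{u. \<theta>s + a T *v u \<in> closure \<Theta> \<and> norm u < K}.
              ereal \<bar>H T \<omega> (\<theta>s + a T *v u) - H T \<omega> \<theta>s\<bar>\<bar>} \<le> measure P E"
          by (rule op_le[OF E(1)])
        thus "outer_prob P {\<omega> \<in> space P. ereal (C + 1) < \<bar>SUP u\<in>{u. \<theta>s + a T *v u \<in> closure \<Theta> \<and> norm u < K}.
              ereal \<bar>H T \<omega> (\<theta>s + a T *v u) - H T \<omega> \<theta>s\<bar>\<bar>} < \<epsilon>" using E(2) by simp
      qed
    qed
  next
    fix K :: real assume K: "K > 0"
    define S where "S T = {(u, v). \<theta>s + a T *v u \<in> closure \<Theta> \<and> \<theta>s + a T *v v \<in> closure \<Theta>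
                              \<and> norm u < K \<and> norm v < K \<and> u \<noteq> v}" for T
    define F where "F T \<omega> = (\<lambda>(u, v). ereal (\<bar>H T \<omega> (\<theta>s + a T *v u) - H T \<omega> (\<theta>s + a T *v v)\<bar> / norm (u - v) powr q))" for T \<omega>
    have "O_p1 P TT (\<lambda>T \<omega>. SUP x\<in>S T. F T \<omega> x)"
      unfolding O_p1_def
    proof (intro allI impI)
      fix \<epsilon> :: real assume e: "\<epsilon> > 0"
      obtain T0 M1 M2 where T0: "T0 \<in> TT" "M1 > 0" "M2 > 0" and kk: "\<forall>T\<in>TT. T \<ge> T0 \<longrightarrow> onorm (\<lambda>x. a T *v x) * K < r \<and>
      (\<exists>E\<in>sets P. measure P E < \<epsilon> \<and> (\<forall>\<omega>\<in>space P - E.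
         thrice_diff_on (H T \<omega>) (D1 T \<omega>) (D2 T \<omega>) (D3 T \<omega>) Bs
         \<and> onorm (\<lambda>x. a T *v x) * norm (D1 T \<omega> \<theta>s) \<le> M1
         \<and> (\<forall>\<theta>\<in>Bs. (onorm (\<lambda>x. a T *v x))\<^sup>2 * norm (D2 T \<omega> \<theta>) \<le> M2)))"
        using key[OF K e] by blast
      define C where "C = (M1 + M2 * K) * (2 * K) powr (1 - q)"
      have C: "C \<ge> 0" using T0 K by (simp add: C_def)
      show "\<exists>T0\<in>TT. \<exists>M>0. \<forall>T\<in>TT. T0 \<le> T \<longrightarrow> outer_prob P {\<omega> \<in> space P. ereal M < \<bar>SUP x\<in>S T. F T \<omega> x\<bar>} < \<epsilon>"
      proof (intro bexI[OF _ T0(1)] exI[of _ "C + 1"] conjI ballI impI)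
        show "C + 1 > 0" using C by simp
        fix T assume T: "T \<in> TT" "T0 \<le> T"
        have ar: "onorm (\<lambda>x. a T *v x) * K < r" using kk T by blast
        obtain E where E: "E \<in> sets P" "measure P E < \<epsilon>" and good: "\<forall>\<omega>\<in>space P - E.
         thrice_diff_on (H T \<omega>) (D1 T \<omega>) (D2 T \<omega>) (D3 T \<omega>) Bs
         \<and> onorm (\<lambda>x. a T *v x) * norm (D1 T \<omega> \<theta>s) \<le> M1
         \<and> (\<forall>\<theta>\<in>Bs. (onorm (\<lambda>x. a T *v x))\<^sup>2 * norm (D2 T \<omega> \<theta>) \<le> M2)"
          using kk T by blast
        have "{\<omega> \<in> space P. ereal (C + 1) < \<bar>SUP x\<in>S T. F T \<omega> x\<bar>} \<inter> space P \<subseteq> E"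
        proof (rule subsetI, rule ccontr)
          fix \<omega> assume w: "\<omega> \<in> {\<omega> \<in> space P. ereal (C + 1) < \<bar>SUP x\<in>S T. F T \<omega> x\<bar>} \<inter> space P" and nE: "\<omega> \<notin> E"
          have g: "thrice_diff_on (H T \<omega>) (D1 T \<omega>) (D2 T \<omega>) (D3 T \<omega>) Bs"
            "onorm (\<lambda>x. a T *v x) * norm (D1 T \<omega> \<theta>s) \<le> M1"
            "\<forall>\<theta>\<in>Bs. (onorm (\<lambda>x. a T *v x))\<^sup>2 * norm (D2 T \<omega> \<theta>) \<le> M2"
            using good w nE by auto
          have "\<bar>SUP x\<in>S T. F T \<omega> x\<bar> \<le> ereal C"
          proof (rule sup_bound)
            define v0 :: "real^'p" where "v0 = (K / 2) *\<^sub>R axis undefined 1"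
            have nv0: "norm v0 = K / 2" using K by (simp add: v0_def)
            have "(0, v0) \<in> S T"
              unfolding S_def using K nv0 inball[OF ar, of v0] inball[OF ar, of 0] BsT closure_subset
              by (auto simp del: matrix_vector_mult_0_right)
            thus "S T \<noteq> {}" by blast
            fix x assume x: "x \<in> S T"
            then obtain u v where uv: "x = (u, v)" "norm u < K" "norm v < K" "u \<noteq> v" unfolding S_def by auto
            have "\<bar>H T \<omega> (\<theta>s + a T *v u) - H T \<omega> (\<theta>s + a T *v v)\<bar> \<le> (M1 + M2 * K) * norm (u - v)"
              using uv by (intro main_bound[OF g(1) rB cB ar K g(2) g(3)]) auto
            moreover have "norm (u - v) \<le> 2 * K"
              using uv norm_triangle_ineq4[of u v] by linarith
            ultimately have "\<bar>H T \<omega> (\<theta>s + a T *v u) - H T \<omega> (\<theta>s + a T *v v)\<bar> / norm (u - v) powr q \<le> C"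
              unfolding C_def using uv q T0 K by (intro pow_bound) auto
            thus "0 \<le> F T \<omega> x \<and> F T \<omega> x \<le> ereal C" using uv by (simp add: F_def)
          qed
          hence "\<bar>SUP x\<in>S T. F T \<omega> x\<bar> < ereal (C + 1)" by (rule le_less_trans) simp
          thus False using w by auto
        qed
        hence "outer_prob P {\<omega> \<in> space P. ereal (C + 1) < \<bar>SUP x\<in>S T. F T \<omega> x\<bar>} \<le> measure P E"
          by (rule op_le[OF E(1)])
        thus "outer_prob P {\<omega> \<in> space P. ereal (C + 1) < \<bar>SUP x\<in>S T. F T \<omega> x\<bar>} < \<epsilon>" using E(2) by simp
      qed
    qed
    thus "O_p1 P TT (\<lambda>T \<omega>.
            SUP (u, v)\<in>{(u, v). \<theta>s + a T *v u \<in> closure \<Theta> \<and> \<theta>s + a T *v v \<in> closure \<Theta>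
                              \<and> norm u < K \<and> norm v < K \<and> u \<noteq> v}.
              ereal (\<bar>H T \<omega> (\<theta>s + a T *v u) - H T \<omega> (\<theta>s + a T *v v)\<bar> / norm (u - v) powr q))"
      by (simp add: S_def F_def)
  qed
qed

end
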